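(* Let $d\in\{1,2,3,7,11\}$, $K=\mathbb{Q}(\sqrt{-d})$, $\mathcal{O}_d$ its ring of integers, and $\Delta$ a positive integer not of the form $\beta\bar\beta$ with $\beta\in\mathcal{O}_d$. Fix $z\in\mathbb{C}$ and a $\hat\Gamma_d$-equivalence class $\mathcal{A}\subset\mathcal{H}(\mathcal{O}_d,-\Delta)$. Put $\mathcal{A}(z)=\{h\in\mathcal{A}: a_h<0<h(z,1)\}$, $\hat{\mathcal{A}}=\{h\in\mathcal{A}: h(0,1)<0<a_h\}$, and $$\mathcal{B}(z)=\{(f,\gamma)\in\hat{\mathcal{A}}\times\hat\Gamma_d(z):\ f(\gamma(\infty),1)<0<f(\gamma(z),1)\}.$$ Then $\Phi(f,\gamma)=\bar\gamma(f)=\gamma^tf\bar\gamma$ defines a map $\Phi:\mathcal{B}(z)\to\mathcal{A}(z)$, and $\Phi$ is surjective.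
   Context: $\mathcal{H}(\mathcal{O}_d,-\Delta)$ is the set of Hermitian matrices $h=\begin{psmallmatrix}a_h&b_h\\\bar b_h&c_h\end{psmallmatrix}$ with $a_h,c_h\in\mathbb{Z}$, $b_h\in\mathcal{O}_d$ and $\det h=a_hc_h-b_h\bar b_h=-\Delta$; the associated form is $h(z,w)=a_h|z|^2+b_hz\bar w+\bar b_h\bar zw+c_h|w|^2$. $\hat\Gamma_d=\mathbf{PGL}(2,\mathcal{O}_d)$ acts by $\sigma(h)=\bar\sigma^th\sigma$. For $\gamma=\begin{psmallmatrix}r&s\\t&v\end{psmallmatrix}$, $\gamma(z)=\frac{rz+s}{tz+v}$ and $\gamma(\infty)=r/t$. Continued fraction of $z$: let $\lfloor w\rceil$ be the element of $\mathcal{O}_d$ nearest to $w$ (ties broken by a fixed rule); $z_0=z$, $\alpha_n=\lfloor z_n\rceil$, $z_{n+1}=1/(z_n-\alpha_n)$, stopping if $z_n=\alpha_n$ (this happens iff $z\in K$). Set $p_{-2}=0,p_{-1}=1,p_n=\alpha_np_{n-1}+p_{n-2}$ and $q_{-2}=1,q_{-1}=0,q_n=\alpha_nq_{n-1}+q_{n-2}$. Then $\hat\Gamma_d(z)$ is the set of matrices $\gamma_n=\begin{psmallmatrix}q_{n-2}&-p_{n-2}\\-q_{n-1}&p_{n-1}\end{psmallmatrix}$ for $n\ge1$ (for which $p_{n-1},q_{n-1}$ are defined). *)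

theory Defs
  imports Complex_Main "HOL-Library.Extended_Real"
begin

definition omega :: "nat \<Rightarrow> complex" where
  "omega d = (if d mod 4 = 3 then (1 + \<i> * complex_of_real (sqrt (real d))) / 2
              else \<i> * complex_of_real (sqrt (real d)))"

definition Od :: "nat \<Rightarrow> complex set" where
  "Od d = {of_int m + of_int n * omega d | m n. True}"

definition is_unit_Od :: "nat \<Rightarrow> complex \<Rightarrow> bool" where
  "is_unit_Od d u \<longleftrightarrow> u \<in> Od d \<and> (\<exists>w \<in> Od d. u * w = 1)"

section \<open>2x2 complex matrices (r, s, t, v) = [[r, s], [t, v]]\<close>

type_synonym cmat = "complex \<times> complex \<times> complex \<times> complex"

fun mmult :: "cmat \<Rightarrow> cmat \<Rightarrow> cmat" where
  "mmult (r, s, t, v) (r', s', t', v') =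
     (r * r' + s * t', r * s' + s * v', t * r' + v * t', t * s' + v * v')"

fun mtrans :: "cmat \<Rightarrow> cmat" where
  "mtrans (r, s, t, v) = (r, t, s, v)"

fun mconj :: "cmat \<Rightarrow> cmat" where
  "mconj (r, s, t, v) = (cnj r, cnj s, cnj t, cnj v)"

fun mdet :: "cmat \<Rightarrow> complex" where
  "mdet (r, s, t, v) = r * v - s * t"

fun entries :: "cmat \<Rightarrow> complex set" where
  "entries (r, s, t, v) = {r, s, t, v}"

text \<open>GL(2, O_d); its action on Hermitian matrices factors through PGL(2, O_d).\<close>
definition GL2 :: "nat \<Rightarrow> cmat set" where
  "GL2 d = {g. entries g \<subseteq> Od d \<and> is_unit_Od d (mdet g)}"

definition act :: "cmat \<Rightarrow> cmat \<Rightarrow> cmat" where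
  "act \<sigma> h = mmult (mmult (mtrans (mconj \<sigma>)) h) \<sigma>"

fun ha :: "cmat \<Rightarrow> complex" where "ha (a, b, b', c) = a"

definition Herm :: "nat \<Rightarrow> int \<Rightarrow> cmat set" where
  "Herm d \<Delta> = {(a, b, b', c) | a b b' c. a \<in> \<int> \<and> c \<in> \<int> \<and> b \<in> Od d \<and> b' = cnj b
                    \<and> a * c - b * b' = - of_int \<Delta>}"

fun hval :: "cmat \<Rightarrow> complex \<Rightarrow> complex \<Rightarrow> real" where
  "hval (a, b, b', c) z w = Re (a * z * cnj z + b * z * cnj w + b' * cnj z * w + c * w * cnj w)"

text \<open>Value of h(x,1) at a point x of the Riemann sphere (None = infinity);
  at infinity we use the limit value, +inf if a_h > 0 and -inf if a_h < 0.\<close>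
fun hval_ext :: "cmat \<Rightarrow> complex option \<Rightarrow> ereal" where
  "hval_ext h (Some x) = ereal (hval h x 1)"
| "hval_ext h None = (if Re (ha h) > 0 then \<infinity> else if Re (ha h) < 0 then - \<infinity> else 0)"

fun mob :: "cmat \<Rightarrow> complex option \<Rightarrow> complex option" where
  "mob (r, s, t, v) None = (if t = 0 then None else Some (r / t))"
| "mob (r, s, t, v) (Some z) =
     (if t * z + v = 0 then None else Some ((r * z + s) / (t * z + v)))"

definition nearest_rounding :: "nat \<Rightarrow> (complex \<Rightarrow> complex) \<Rightarrow> bool" where
  "nearest_rounding d rd \<longleftrightarrow>
     (\<forall>w. rd w \<in> Od d \<and> (\<forall>\<beta> \<in> Od d. cmod (w - rd w) \<le> cmod (w - \<beta>)))"

primrec cf_z :: "(complex \<Rightarrow> complex) \<Rightarrow> complex \<Rightarrow> nat \<Rightarrow> complex" where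
  "cf_z rd z 0 = z"
| "cf_z rd z (Suc n) = 1 / (cf_z rd z n - rd (cf_z rd z n))"

definition cf_alpha :: "(complex \<Rightarrow> complex) \<Rightarrow> complex \<Rightarrow> nat \<Rightarrow> complex" where
  "cf_alpha rd z n = rd (cf_z rd z n)"

text \<open>alpha_n is defined iff the algorithm did not stop before step n.\<close>
definition cf_defined :: "(complex \<Rightarrow> complex) \<Rightarrow> complex \<Rightarrow> nat \<Rightarrow> bool" where
  "cf_defined rd z n \<longleftrightarrow> (\<forall>k < n. cf_z rd z k \<noteq> cf_alpha rd z k)"

text \<open>Shifted indices: cfP rd z m = p_(m-2), cfQ rd z m = q_(m-2).\<close>
fun cfP :: "(complex \<Rightarrow> complex) \<Rightarrow> complex \<Rightarrow> nat \<Rightarrow> complex" where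
  "cfP rd z 0 = 0"
| "cfP rd z (Suc 0) = 1"
| "cfP rd z (Suc (Suc m)) = cf_alpha rd z m * cfP rd z (Suc m) + cfP rd z m"

fun cfQ :: "(complex \<Rightarrow> complex) \<Rightarrow> complex \<Rightarrow> nat \<Rightarrow> complex" where
  "cfQ rd z 0 = 1"
| "cfQ rd z (Suc 0) = 0"
| "cfQ rd z (Suc (Suc m)) = cf_alpha rd z m * cfQ rd z (Suc m) + cfQ rd z m"

text \<open>gamma_n = [[q_(n-2), -p_(n-2)], [-q_(n-1), p_(n-1)]] for n \<ge> 1 with p_(n-1), q_(n-1) defined.\<close>
definition Gamma_z :: "(complex \<Rightarrow> complex) \<Rightarrow> complex \<Rightarrow> cmat set" where
  "Gamma_z rd z = {(cfQ rd z n, - cfP rd z n, - cfQ rd z (Suc n), cfP rd z (Suc n)) | n.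
                    1 \<le> n \<and> cf_defined rd z (n - 1)}"

end

theory Submission
  imports Defs
begin

lemma Od_iff: "x \<in> Od d \<longleftrightarrow> (\<exists>m n. x = of_int m + of_int n * omega d)"
  by (auto simp: Od_def)

lemma sqrt_sq_c: "complex_of_real (sqrt (real d)) * complex_of_real (sqrt (real d)) = of_nat d"
  by (simp only: of_real_mult[symmetric]) simp

lemma omega_sq: "\<exists>u v. omega d * omega d = of_int u + of_int v * omega d"
proof (cases "d mod 4 = 3")
  case True
  have "4 dvd d + 1" using True by presburger
  then obtain k where k: "d + 1 = 4 * k" by (auto elim: dvdE)
  define S where "S = complex_of_real (sqrt (real d))"
  have SS: "S * S = of_nat d" unfolding S_def by (rule sqrt_sq_c)
  have dk: "(of_nat d :: complex) = 4 * of_nat k - 1"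
    using arg_cong[OF k, of "of_nat :: nat \<Rightarrow> complex"] by (simp add: algebra_simps)
  have om: "omega d = (1 + \<i> * S) / 2" using True by (simp add: omega_def S_def)
  have "(1 + \<i> * S) * (1 + \<i> * S) = 1 + 2 * \<i> * S - S * S"
    by (simp add: algebra_simps)
  also have "\<dots> = 2 - 4 * of_nat k + 2 * \<i> * S" by (simp add: SS dk)
  finally have sq: "(1 + \<i> * S) * (1 + \<i> * S) = 2 - 4 * of_nat k + 2 * \<i> * S" .
  have "omega d * omega d = ((1 + \<i> * S) * (1 + \<i> * S)) / 4"
    unfolding om by (simp add: field_simps)
  also have "\<dots> = (2 - 4 * of_nat k + 2 * \<i> * S) / 4" by (simp only: sq)
  also have "\<dots> = of_int (- int k) + of_int 1 * omega d"
    unfolding om by (simp add: field_simps)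
  finally have "omega d * omega d = of_int (- int k) + of_int 1 * omega d" .
  then show ?thesis by blast
next
  case False
  have "omega d * omega d = of_int (- int d) + of_int 0 * omega d"
    using False sqrt_sq_c[of d] by (simp add: omega_def algebra_simps)
  then show ?thesis by blast
qed

lemma omega_cnj: "\<exists>u v. cnj (omega d) = of_int u + of_int v * omega d"
proof (cases "d mod 4 = 3")
  case True
  have "cnj (omega d) = of_int 1 + of_int (-1) * omega d"
    using True by (simp add: omega_def field_simps complex_eq_iff)
  then show ?thesis by blast
next
  case False
  have "cnj (omega d) = of_int 0 + of_int (-1) * omega d"
    using False by (simp add: omega_def)
  then show ?thesis by blast
qed

lemma Od_add: "x \<in> Od d \<Longrightarrow> y \<in> Od d \<Longrightarrow> x + y \<in> Od d"
proof -
  assume "x \<in> Od d" "y \<in> Od d"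
  then obtain m n m' n' where xy: "x = of_int m + of_int n * omega d" "y = of_int m' + of_int n' * omega d"
    unfolding Od_iff by blast
  have "x + y = of_int (m + m') + of_int (n + n') * omega d" by (simp add: xy algebra_simps)
  then show ?thesis unfolding Od_iff by blast
qed

lemma Od_uminus: "x \<in> Od d \<Longrightarrow> - x \<in> Od d"
proof -
  assume "x \<in> Od d"
  then obtain m n where xy: "x = of_int m + of_int n * omega d"
    unfolding Od_iff by blast
  have "- x = of_int (- m) + of_int (- n) * omega d" by (simp add: xy algebra_simps)
  then show ?thesis unfolding Od_iff by blast
qed

lemma Od_diff: "x \<in> Od d \<Longrightarrow> y \<in> Od d \<Longrightarrow> x - y \<in> Od d"
  using Od_add[of x d "- y"] Od_uminus[of y d] by simp

lemma Od_of_int: "of_int k \<in> Od d"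
  unfolding Od_iff by (rule exI[of _ k], rule exI[of _ 0]) simp

lemma Od_0: "0 \<in> Od d" and Od_1: "1 \<in> Od d"
  using Od_of_int[of 0 d] Od_of_int[of 1 d] by auto

lemma Od_mult: "x \<in> Od d \<Longrightarrow> y \<in> Od d \<Longrightarrow> x * y \<in> Od d"
proof -
  assume "x \<in> Od d" "y \<in> Od d"
  then obtain m n m' n' where xy: "x = of_int m + of_int n * omega d" "y = of_int m' + of_int n' * omega d"
    unfolding Od_iff by blast
  obtain u v where uv: "omega d * omega d = of_int u + of_int v * omega d" using omega_sq by blast
  have "x * y = of_int m * of_int m' + (of_int m * of_int n' + of_int n * of_int m') * omega d
         + of_int n * of_int n' * (omega d * omega d)"
    by (simp add: xy algebra_simps)
  also have "\<dots> = of_int (m * m' + n * n' * u) + of_int (m * n' + n * m' + n * n' * v) * omega d"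
    by (simp add: uv algebra_simps)
  finally show ?thesis unfolding Od_iff by blast
qed

lemma Od_cnj: "x \<in> Od d \<Longrightarrow> cnj x \<in> Od d"
proof -
  assume "x \<in> Od d"
  then obtain m n where x: "x = of_int m + of_int n * omega d" unfolding Od_iff by blast
  obtain u v where uv: "cnj (omega d) = of_int u + of_int v * omega d" using omega_cnj by blast
  have "cnj x = of_int (m + n * u) + of_int (n * v) * omega d"
    by (simp add: x uv algebra_simps)
  then show ?thesis unfolding Od_iff by blast
qed

lemma Im_omega: "d > 0 \<Longrightarrow> Im (omega d) > 0"
  by (simp add: omega_def)

lemma Od_real: "d > 0 \<Longrightarrow> x \<in> Od d \<Longrightarrow> Im x = 0 \<Longrightarrow> \<exists>k. x = of_int k"
proof -
  assume d: "d > 0" and "x \<in> Od d" and im: "Im x = 0"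
  then obtain m n where x: "x = of_int m + of_int n * omega d" unfolding Od_iff by blast
  have "of_int n * Im (omega d) = 0" using im by (simp add: x)
  with Im_omega[OF d] have "n = 0" by simp
  then show ?thesis using x by auto
qed

lemma Od_norm: "d > 0 \<Longrightarrow> x \<in> Od d \<Longrightarrow> \<exists>k. x * cnj x = of_int k"
  by (rule Od_real) (auto intro: Od_mult Od_cnj)

lemma Od_trace: "d > 0 \<Longrightarrow> x \<in> Od d \<Longrightarrow> \<exists>k. x + cnj x = of_int k"
  by (rule Od_real) (auto intro: Od_add Od_cnj)

lemma Od_norm_ge1: "d > 0 \<Longrightarrow> x \<in> Od d \<Longrightarrow> x \<noteq> 0 \<Longrightarrow> cmod x \<ge> 1"
proof -
  assume d: "d > 0" and x: "x \<in> Od d" "x \<noteq> 0"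
  obtain k where k: "x * cnj x = of_int k" using Od_norm[OF d x(1)] by blast
  have "of_real ((cmod x)^2) = (of_int k :: complex)" using k complex_norm_square[of x] by simp
  then have "(cmod x)^2 = of_int k"
    by (metis of_real_eq_iff of_real_of_int_eq)
  moreover have "(cmod x)^2 > 0" using x by simp
  ultimately have "k \<ge> 1" by simp
  then have "(cmod x)^2 \<ge> 1" using \<open>(cmod x)^2 = of_int k\<close> by simp
  show ?thesis
  proof (rule ccontr)
    assume "\<not> 1 \<le> cmod x"
    then have "cmod x * cmod x < 1 * 1" by (intro mult_strict_mono) auto
    then show False using \<open>(cmod x)^2 \<ge> 1\<close> by (simp add: power2_eq_square)
  qed
qed

lemma round_close: "\<bar>x - of_int \<lfloor>x + 1/2\<rfloor>\<bar> \<le> (1/2::real)"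
  by linarith

lemma covering:
  assumes d: "d \<in> {1, 2, 3, 7, 11}"
  shows "\<exists>\<beta>\<in>Od d. (cmod (w - \<beta>))^2 \<le> 15/16"
proof -
  define S where "S = sqrt (real d)"
  have Spos: "S > 0" using d by (auto simp: S_def)
  have SS: "S^2 = real d" unfolding S_def by simp
  show ?thesis
  proof (cases "d mod 4 = 3")
    case False
    then have dle: "real d \<le> 2" using d by auto
    have om: "omega d = \<i> * complex_of_real S" using False by (simp add: omega_def S_def)
    define m where "m = \<lfloor>Re w + 1/2\<rfloor>"
    define n where "n = \<lfloor>Im w / S + 1/2\<rfloor>"
    define \<beta> where "\<beta> = of_int m + of_int n * omega d"
    have b: "\<beta> \<in> Od d" unfolding Od_iff \<beta>_def by blast
    have re: "Re (w - \<beta>) = Re w - m" by (simp add: \<beta>_def om)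
    have im: "Im (w - \<beta>) = S * (Im w / S - n)" using Spos by (simp add: \<beta>_def om field_simps)
    have r1: "\<bar>Re w - m\<bar> \<le> 1/2" unfolding m_def by (rule round_close)
    have r2: "\<bar>Im w / S - n\<bar> \<le> 1/2" unfolding n_def by (rule round_close)
    have "(Re w - m)^2 \<le> (1/2)^2" using r1 abs_le_square_iff[of "Re w - m" "1/2"] by simp
    moreover have "(Im w / S - n)^2 \<le> (1/2)^2" using r2 abs_le_square_iff[of "Im w / S - n" "1/2"] by simp
    then have "S^2 * (Im w / S - n)^2 \<le> S^2 * (1/2)^2" by (simp add: mult_left_mono)
    ultimately have "(Re (w - \<beta>))^2 + (Im (w - \<beta>))^2 \<le> 1/4 + real d / 4"
      unfolding re im by (simp add: power_mult_distrib SS power_divide)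
    also have "\<dots> \<le> 15/16" using dle by simp
    finally show ?thesis using b by (auto simp: cmod_power2)
  next
    case True
    then have dle: "real d \<le> 11" using d by auto
    have om: "omega d = (1 + \<i> * complex_of_real S) / 2" using True by (simp add: omega_def S_def)
    define n where "n = \<lfloor>2 * Im w / S + 1/2\<rfloor>"
    define m where "m = \<lfloor>Re w - n / 2 + 1/2\<rfloor>"
    define \<beta> where "\<beta> = of_int m + of_int n * omega d"
    have b: "\<beta> \<in> Od d" unfolding Od_iff \<beta>_def by blast
    have re: "Re (w - \<beta>) = (Re w - n / 2) - m" by (simp add: \<beta>_def om)
    have im: "Im (w - \<beta>) = (S / 2) * (2 * Im w / S - n)" using Spos by (simp add: \<beta>_def om field_simps)
    have r1: "\<bar>(Re w - n / 2) - m\<bar> \<le> 1/2" unfolding m_def by (rule round_close)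
    have r2: "\<bar>2 * Im w / S - n\<bar> \<le> 1/2" unfolding n_def by (rule round_close)
    have "((Re w - n / 2) - m)^2 \<le> (1/2)^2" using r1 abs_le_square_iff[of "(Re w - n / 2) - m" "1/2"] by simp
    moreover have "(2 * Im w / S - n)^2 \<le> (1/2)^2" using r2 abs_le_square_iff[of "2 * Im w / S - n" "1/2"] by simp
    then have "(S/2)^2 * (2 * Im w / S - n)^2 \<le> (S/2)^2 * (1/2)^2" by (simp add: mult_left_mono)
    ultimately have "(Re (w - \<beta>))^2 + (Im (w - \<beta>))^2 \<le> 1/4 + real d / 16"
      unfolding re im by (simp add: power_mult_distrib SS power_divide)
    also have "\<dots> \<le> 15/16" using dle by simp
    finally show ?thesis using b by (auto simp: cmod_power2)
  qed
qed

lemma descent: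
  assumes d: "d \<in> {1, 2, 3, 7, 11}"
  shows "0 < m \<Longrightarrow> of_nat m * \<beta> \<in> Od d \<Longrightarrow> \<beta> * cnj \<beta> = of_int \<Delta>
         \<Longrightarrow> \<exists>\<beta>'\<in>Od d. of_int \<Delta> = \<beta>' * cnj \<beta>'"
proof (induction m arbitrary: \<beta> rule: less_induct)
  case (less m)
  have d0: "d > 0" using d by auto
  obtain g where g: "g \<in> Od d" "(cmod (\<beta> - g))^2 \<le> 15/16" using covering[OF d] by blast
  show ?case
  proof (cases "\<beta> = g")
    case True
    then show ?thesis using less.prems g by (intro bexI[of _ g]) auto
  next
    case False
    define x where "x = of_nat m * \<beta>"
    have x: "x \<in> Od d" using less.prems by (simp add: x_def)
    obtain T where T0: "cnj x * g + cnj (cnj x * g) = of_int T"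
      using Od_trace[OF d0 Od_mult[OF Od_cnj[OF x] g(1)]] by blast
    have hT: "of_int T = of_nat m * (cnj \<beta> * g + \<beta> * cnj g)"
      using T0 by (simp add: x_def algebra_simps)
    obtain N where N: "g * cnj g = of_int N" using Od_norm[OF d0 g(1)] by blast
    define Nn where "Nn = (g - \<beta>) * cnj (g - \<beta>)"
    define Sx where "Sx = cnj \<beta> * (g - \<beta>) + \<beta> * cnj (g - \<beta>)"
    have Nn_real: "Nn = of_real ((cmod (g - \<beta>))^2)" unfolding Nn_def by (rule complex_norm_square[symmetric])
    have pos: "(cmod (g - \<beta>))^2 > 0" using False by simp
    have le: "(cmod (g - \<beta>))^2 \<le> 15/16" using g(2) by (simp add: norm_minus_commute)
    have Nn0: "Nn \<noteq> 0" using Nn_real pos by simp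
    define M where "M = int m * N - T + int m * \<Delta>"
    have key1: "of_nat m * Nn = of_int M"
      unfolding M_def of_int_add of_int_diff of_int_mult
      by (simp add: Nn_def N[symmetric] hT less.prems(3)[symmetric] algebra_simps)
    have "complex_of_real (real m * (cmod (g - \<beta>))^2) = complex_of_real (of_int M)"
      using key1 Nn_real by simp
    then have Mr: "real m * (cmod (g - \<beta>))^2 = of_int M" by (simp only: of_real_eq_iff)
    have "real m * (cmod (g - \<beta>))^2 > 0" using pos less.prems(1) by simp
    then have M0: "M > 0" using Mr by simp
    have "real m * (cmod (g - \<beta>))^2 < real m * 1"
      using le less.prems(1) by (intro mult_strict_left_mono) auto
    then have Mm: "nat M < m" using Mr M0 by linarith
    define tc where "tc = - Sx / Nn"
    define \<beta>' where "\<beta>' = \<beta> + tc * (g - \<beta>)"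
    have cSx: "cnj Sx = Sx" by (simp add: Sx_def algebra_simps)
    have cNn: "cnj Nn = Nn" by (simp add: Nn_def algebra_simps)
    have ctc: "cnj tc = tc" by (simp add: tc_def cSx cNn)
    have e1: "\<beta>' * cnj \<beta>' = \<beta> * cnj \<beta> + tc * (Sx + tc * Nn)"
      by (simp add: \<beta>'_def ctc Sx_def Nn_def algebra_simps)
    have e2: "Sx + tc * Nn = 0" using Nn0 by (simp add: tc_def)
    have b'n: "\<beta>' * cnj \<beta>' = of_int \<Delta>" using e1 e2 less.prems(3) by simp
    have mS: "of_nat m * Sx = of_int T - 2 * of_nat m * of_int \<Delta>"
      by (simp add: Sx_def hT less.prems(3)[symmetric] algebra_simps)
    have mNt: "of_nat m * Nn * tc = - (of_nat m * Sx)" using Nn0 by (simp add: tc_def)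
    have "of_int M * \<beta>' = of_nat m * Nn * \<beta> + (of_nat m * Nn * tc) * (g - \<beta>)"
      by (simp add: key1[symmetric] \<beta>'_def algebra_simps)
    also have "\<dots> = of_nat m * Nn * \<beta> - (of_nat m * Sx) * (g - \<beta>)"
      by (simp only: mNt) simp
    also have "\<dots> = of_int M * \<beta> - (of_int T - 2 * of_nat m * of_int \<Delta>) * (g - \<beta>)"
      by (simp only: mS key1)
    also have "\<dots> = of_int (N - \<Delta>) * x - of_int (T - 2 * int m * \<Delta>) * g"
      unfolding M_def x_def by (simp add: algebra_simps)
    finally have eq: "of_int M * \<beta>' = of_int (N - \<Delta>) * x - of_int (T - 2 * int m * \<Delta>) * g" .
    have "of_nat (nat M) * \<beta>' = of_int (N - \<Delta>) * x - of_int (T - 2 * int m * \<Delta>) * g"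
      using eq M0 by simp
    also have "\<dots> \<in> Od d" by (intro Od_diff Od_mult Od_of_int x g(1))
    finally have "of_nat (nat M) * \<beta>' \<in> Od d" .
    then show ?thesis using less.IH[OF Mm _ _ b'n] M0 by auto
  qed
qed

lemma herm_nonzero:
  assumes d: "d \<in> {1, 2, 3, 7, 11}"
    and nn: "\<not> (\<exists>\<beta> \<in> Od d. of_int \<Delta> = \<beta> * cnj \<beta>)"
    and h0: "h0 \<in> Herm d \<Delta>" and x: "x \<in> Od d" and y: "y \<in> Od d" and xy: "x \<noteq> 0 \<or> y \<noteq> 0"
  shows "hval h0 x y \<noteq> 0"
proof
  assume hz: "hval h0 x y = 0"
  have d0: "d > 0" using d by auto
  obtain a b c where h0e: "h0 = (a, b, cnj b, c)" and a: "a \<in> \<int>" and c: "c \<in> \<int>" and b: "b \<in> Od d"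
    and det: "a * c - b * cnj b = - of_int \<Delta>"
    using h0 unfolding Herm_def by blast
  obtain A where A: "a = of_int A" using a Ints_cases by blast
  obtain C where C: "c = of_int C" using c Ints_cases by blast
  define X where "X = a * x * cnj x + b * x * cnj y + cnj b * cnj x * y + c * y * cnj y"
  define u where "u = a * x + cnj b * y"
  have hv: "hval h0 x y = Re X" by (simp add: h0e X_def)
  have dd: "of_int \<Delta> = b * cnj b - of_int A * of_int C" using det A C by (simp add: algebra_simps)
  have key: "of_int A * X = u * cnj u - of_int \<Delta> * (y * cnj y)"
    unfolding dd by (simp add: X_def u_def A C algebra_simps)
  have "Re (of_int A * X) = (cmod u)^2 - of_int \<Delta> * (cmod y)^2"
    unfolding key by (simp add: complex_norm_square[symmetric] del: of_real_power)
  then have rel: "of_int A * hval h0 x y = (cmod u)^2 - of_int \<Delta> * (cmod y)^2"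
    by (simp add: hv)
  show False
  proof (cases "A = 0")
    case True
    then have "of_int \<Delta> = b * cnj b" using dd by simp
    then show False using nn b by blast
  next
    case False
    have uy: "(cmod u)^2 = of_int \<Delta> * (cmod y)^2" using rel hz by simp
    show False
    proof (cases "y = 0")
      case True
      then have "x \<noteq> 0" using xy by simp
      have "u = of_int A * x" using True by (simp add: u_def A)
      then have "cmod u \<noteq> 0" using False \<open>x \<noteq> 0\<close> by simp
      then show False using uy True by simp
    next
      case yne: False
      obtain k where k: "y * cnj y = of_int k" using Od_norm[OF d0 y] by blast
      have kr: "(cmod y)^2 = of_int k"
        using k complex_norm_square[of y] by (metis of_real_eq_iff of_real_of_int_eq)
      have kpos: "k > 0" using kr yne by (smt (verit) of_int_le_0_iff zero_less_power2 zero_less_norm_iff)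
      define \<beta> where "\<beta> = u / y"
      have "u * cnj u = complex_of_real ((cmod u)^2)" by (rule complex_norm_square[symmetric])
      also have "\<dots> = complex_of_real (of_int \<Delta> * (cmod y)^2)" by (simp only: uy)
      also have "\<dots> = of_int \<Delta> * complex_of_real ((cmod y)^2)" by (simp only: of_real_mult of_real_of_int_eq)
      also have "\<dots> = of_int \<Delta> * (y * cnj y)" by (simp only: complex_norm_square)
      finally have "u * cnj u = of_int \<Delta> * (y * cnj y)" .
      then have bb: "\<beta> * cnj \<beta> = of_int \<Delta>" using yne by (simp add: \<beta>_def field_simps)
      have "of_nat (nat k) * \<beta> = u * cnj y"
        using kpos yne k[symmetric] by (simp add: \<beta>_def field_simps)
      also have "\<dots> \<in> Od d" unfolding u_def A
        by (intro Od_mult Od_add Od_cnj Od_of_int b x y)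
      finally have "of_nat (nat k) * \<beta> \<in> Od d" .
      from descent[OF d _ this bb] kpos nn show False by auto
    qed
  qed
qed

lemma act_hval: "hval (act (r, s, t, v) H) x y = hval H (cnj r * x + cnj s * y) (cnj t * x + cnj v * y)"
  by (cases H) (simp add: act_def algebra_simps)

lemma act_act: "act \<sigma> (act \<tau> H) = act (mmult \<tau> \<sigma>) H"
  by (cases \<sigma>; cases \<tau>; cases H) (simp add: act_def algebra_simps)

lemma act_id: "act (1, 0, 0, 1) H = H"
  by (cases H) (simp add: act_def)

lemma hval_hom: "hval H (l * x) (l * y) = (cmod l)^2 * hval H x y"
proof -
  obtain a b b' c where H: "H = (a, b, b', c)" by (cases H) auto
  have "hval H (l * x) (l * y) = Re ((l * cnj l) * (a * x * cnj x + b * x * cnj y + b' * cnj x * y + c * y * cnj y))"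
    by (simp add: H algebra_simps)
  also have "l * cnj l = complex_of_real ((cmod l)^2)" by (rule complex_norm_square[symmetric])
  finally show ?thesis by (simp add: H)
qed

lemma hval_10: "hval H 1 0 = Re (ha H)"
  by (cases H) simp

lemma hval_x0: "hval H x 0 = (cmod x)^2 * Re (ha H)"
  using hval_hom[of H x 1 0] by (simp add: hval_10)

lemma hval_div: "w \<noteq> 0 \<Longrightarrow> hval H x w = (cmod w)^2 * hval H (x / w) 1"
  using hval_hom[of H w "x / w" 1] by simp

lemma mdet_mmult: "mdet (mmult a b) = mdet a * mdet b"
  by (cases a; cases b) (simp add: algebra_simps)

lemma GL2_mult:
  assumes "a \<in> GL2 d" "b \<in> GL2 d" shows "mmult a b \<in> GL2 d"
proof -
  obtain r s t v where a: "a = (r, s, t, v)" by (cases a) auto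
  obtain r' s' t' v' where b: "b = (r', s', t', v')" by (cases b) auto
  have ea: "r \<in> Od d" "s \<in> Od d" "t \<in> Od d" "v \<in> Od d" using assms(1) by (auto simp: GL2_def a)
  have eb: "r' \<in> Od d" "s' \<in> Od d" "t' \<in> Od d" "v' \<in> Od d" using assms(2) by (auto simp: GL2_def b)
  obtain w1 where w1: "w1 \<in> Od d" "mdet a * w1 = 1" "mdet a \<in> Od d"
    using assms(1) by (auto simp: GL2_def is_unit_Od_def)
  obtain w2 where w2: "w2 \<in> Od d" "mdet b * w2 = 1" "mdet b \<in> Od d"
    using assms(2) by (auto simp: GL2_def is_unit_Od_def)
  have "entries (mmult a b) \<subseteq> Od d"
    using ea eb by (simp add: a b Od_add Od_mult)
  moreover have "is_unit_Od d (mdet (mmult a b))"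
    unfolding is_unit_Od_def mdet_mmult
  proof (intro conjI bexI)
    show "mdet a * mdet b \<in> Od d" using w1 w2 by (simp add: Od_mult)
    show "mdet a * mdet b * (w1 * w2) = 1"
      using w1(2) w2(2) by (metis mult.assoc mult.left_commute mult_1)
    show "w1 * w2 \<in> Od d" using w1 w2 by (simp add: Od_mult)
  qed
  ultimately show ?thesis by (simp add: GL2_def)
qed

lemma GL2_intro:
  assumes "r \<in> Od d" "s \<in> Od d" "t \<in> Od d" "v \<in> Od d" "r * v - s * t = e" "e * e = 1" "e \<in> Od d"
  shows "(r, s, t, v) \<in> GL2 d"
  using assms unfolding GL2_def is_unit_Od_def by auto

lemma class_act:
  assumes "h \<in> {act \<sigma> h0 | \<sigma>. \<sigma> \<in> GL2 d}" "\<tau> \<in> GL2 d"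
  shows "act \<tau> h \<in> {act \<sigma> h0 | \<sigma>. \<sigma> \<in> GL2 d}"
  using assms act_act GL2_mult by blast

lemma GL2_nonsing: "\<sigma> \<in> GL2 d \<Longrightarrow> mdet \<sigma> \<noteq> 0"
  by (auto simp: GL2_def is_unit_Od_def)

lemma class_nonzero:
  assumes d: "d \<in> {1, 2, 3, 7, 11}"
    and nn: "\<not> (\<exists>\<beta> \<in> Od d. of_int \<Delta> = \<beta> * cnj \<beta>)"
    and h0: "h0 \<in> Herm d \<Delta>" and h: "h \<in> {act \<sigma> h0 | \<sigma>. \<sigma> \<in> GL2 d}"
    and x: "x \<in> Od d" and y: "y \<in> Od d" and xy: "x \<noteq> 0 \<or> y \<noteq> 0"
  shows "hval h x y \<noteq> 0"
proof -
  obtain \<sigma> where s: "\<sigma> \<in> GL2 d" and hs: "h = act \<sigma> h0" using h by blast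
  obtain r s t v where se: "\<sigma> = (r, s, t, v)" by (cases \<sigma>) auto
  have e: "r \<in> Od d" "s \<in> Od d" "t \<in> Od d" "v \<in> Od d" using s by (auto simp: GL2_def se)
  have det: "r * v - s * t \<noteq> 0" using GL2_nonsing[OF s] by (simp add: se)
  define x' where "x' = cnj r * x + cnj s * y"
  define y' where "y' = cnj t * x + cnj v * y"
  have hv: "hval h x y = hval h0 x' y'" by (simp add: hs se act_hval x'_def y'_def)
  have "x' \<noteq> 0 \<or> y' \<noteq> 0"
  proof (rule ccontr)
    assume "\<not> (x' \<noteq> 0 \<or> y' \<noteq> 0)"
    then have z: "x' = 0" "y' = 0" by auto
    have "cnj (r * v - s * t) * x = cnj v * x' - cnj s * y'" by (simp add: x'_def y'_def algebra_simps)
    then have "cnj (r * v - s * t) * x = 0" using z by simp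
    moreover have "cnj (r * v - s * t) \<noteq> 0" using det by (metis complex_cnj_zero_iff)
    ultimately have "x = 0" by (metis mult_eq_0_iff)
    have "cnj (r * v - s * t) * y = cnj r * y' - cnj t * x'" by (simp add: x'_def y'_def algebra_simps)
    then have "cnj (r * v - s * t) * y = 0" using z by simp
    moreover have "cnj (r * v - s * t) \<noteq> 0" using det by (metis complex_cnj_zero_iff)
    ultimately have "y = 0" by (metis mult_eq_0_iff)
    then show False using \<open>x = 0\<close> xy by simp
  qed
  moreover have "x' \<in> Od d" "y' \<in> Od d" unfolding x'_def y'_def
    by (intro Od_add Od_mult Od_cnj e x y)+
  ultimately show ?thesis using herm_nonzero[OF d nn h0] hv by auto
qed

lemma cf_alpha_Od: "nearest_rounding d rd \<Longrightarrow> cf_alpha rd z k \<in> Od d"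
  by (simp add: nearest_rounding_def cf_alpha_def)

lemma cfP_Od: "nearest_rounding d rd \<Longrightarrow> cfP rd z k \<in> Od d"
  by (induction rd z k rule: cfP.induct) (auto intro: Od_add Od_mult cf_alpha_Od Od_0 Od_1)

lemma cfQ_Od: "nearest_rounding d rd \<Longrightarrow> cfQ rd z k \<in> Od d"
  by (induction rd z k rule: cfQ.induct) (auto intro: Od_add Od_mult cf_alpha_Od Od_0 Od_1)

lemma cf_det: "cfP rd z (Suc k) * cfQ rd z k - cfP rd z k * cfQ rd z (Suc k) = (-1)^k"
proof (induction k)
  case 0
  then show ?case by simp
next
  case (Suc k)
  have "cfP rd z (Suc (Suc k)) * cfQ rd z (Suc k) - cfP rd z (Suc k) * cfQ rd z (Suc (Suc k))
        = - (cfP rd z (Suc k) * cfQ rd z k - cfP rd z k * cfQ rd z (Suc k))"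
    by (simp add: algebra_simps)
  then show ?case using Suc by simp
qed

lemma zeta_bound:
  assumes d: "d \<in> {1, 2, 3, 7, 11}" and nr: "nearest_rounding d rd"
  shows "cmod (w - rd w) \<le> 97/100"
proof -
  obtain \<beta> where b: "\<beta> \<in> Od d" "(cmod (w - \<beta>))^2 \<le> 15/16" using covering[OF d] by blast
  have "cmod (w - rd w) \<le> cmod (w - \<beta>)" using nr b(1) by (auto simp: nearest_rounding_def)
  then have "(cmod (w - rd w))^2 \<le> (cmod (w - \<beta>))^2" by (simp add: power_mono)
  then have "(cmod (w - rd w))^2 \<le> 15/16" using b(2) by linarith
  also have "(15/16::real) \<le> (97/100)^2" by (simp add: power_divide)
  finally have "(cmod (w - rd w))^2 \<le> (97/100)^2" .
  then show ?thesis by (rule power2_le_imp_le) auto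
qed

lemma cf_defined_0: "cf_defined rd z 0"
  by (simp add: cf_defined_def)

lemma cf_defined_Suc: "cf_defined rd z (Suc m) \<Longrightarrow> cf_defined rd z m"
  by (simp add: cf_defined_def)

lemma cf_defined_le: "cf_defined rd z m \<Longrightarrow> k \<le> m \<Longrightarrow> cf_defined rd z k"
  by (simp add: cf_defined_def)

definition cfE :: "(complex \<Rightarrow> complex) \<Rightarrow> complex \<Rightarrow> nat \<Rightarrow> complex" where
  "cfE rd z k = cfQ rd z k * z - cfP rd z k"

lemma cfE_rec: "cf_defined rd z m \<Longrightarrow>
   cfE rd z (Suc (Suc m)) = - (cf_z rd z m - cf_alpha rd z m) * cfE rd z (Suc m)"
proof (induction m)
  case 0
  then show ?case by (simp add: cfE_def)
next
  case (Suc m)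
  have dm: "cf_defined rd z m" using Suc.prems by (rule cf_defined_Suc)
  have nz: "cf_z rd z m - cf_alpha rd z m \<noteq> 0" using Suc.prems by (simp add: cf_defined_def)
  have IH: "cfE rd z (Suc (Suc m)) = - (cf_z rd z m - cf_alpha rd z m) * cfE rd z (Suc m)"
    using Suc.IH dm by blast
  have zS: "cf_z rd z (Suc m) = 1 / (cf_z rd z m - cf_alpha rd z m)" by (simp add: cf_alpha_def)
  have E1: "cfE rd z (Suc m) = - cf_z rd z (Suc m) * cfE rd z (Suc (Suc m))"
    unfolding IH zS using nz by (simp add: field_simps)
  have rec: "cfE rd z (Suc (Suc (Suc m))) = cf_alpha rd z (Suc m) * cfE rd z (Suc (Suc m)) + cfE rd z (Suc m)"
    by (simp add: cfE_def algebra_simps)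
  show ?case unfolding rec E1 by (simp add: algebra_simps)
qed

lemma cfE_bound:
  assumes d: "d \<in> {1, 2, 3, 7, 11}" and nr: "nearest_rounding d rd"
  shows "cf_defined rd z m \<Longrightarrow> cmod (cfE rd z (Suc (Suc m))) \<le> (97/100)^(Suc m)"
proof (induction m)
  case 0
  have "cmod (cfE rd z (Suc (Suc 0))) = cmod (cf_z rd z 0 - cf_alpha rd z 0)"
    using cfE_rec[OF 0] by (simp add: cfE_def)
  also have "\<dots> \<le> 97/100" unfolding cf_alpha_def by (rule zeta_bound[OF d nr])
  finally show ?case by simp
next
  case (Suc m)
  have "cmod (cfE rd z (Suc (Suc (Suc m))))
        = cmod (cf_z rd z (Suc m) - cf_alpha rd z (Suc m)) * cmod (cfE rd z (Suc (Suc m)))"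
    using cfE_rec[OF Suc.prems] by (simp add: norm_mult norm_minus_commute del: cf_z.simps)
  also have "\<dots> \<le> 97/100 * (97/100)^(Suc m)"
    using zeta_bound[OF d nr] Suc.IH[OF cf_defined_Suc[OF Suc.prems]] unfolding cf_alpha_def
    by (intro mult_mono) auto
  finally show ?case by simp
qed

lemma cfE_small:
  assumes d: "d \<in> {1, 2, 3, 7, 11}" and nr: "nearest_rounding d rd" and e: "\<epsilon> > 0"
  shows "\<exists>m. cf_defined rd z m \<and> cmod (cfE rd z (Suc (Suc m))) < \<epsilon>"
proof (cases "\<forall>m. cf_defined rd z m")
  case True
  have "(\<lambda>n. (97/100::real)^n) \<longlonglongrightarrow> 0" by (rule LIMSEQ_realpow_zero) auto
  then have "\<forall>\<^sub>F n in sequentially. (97/100::real)^n < \<epsilon>" using e by (rule order_tendstoD)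
  then obtain N where N: "\<And>n. n \<ge> N \<Longrightarrow> (97/100::real)^n < \<epsilon>"
    unfolding eventually_sequentially by blast
  define n where "n = N"
  have n: "(97/100::real)^(Suc n) < \<epsilon>" using N[of "Suc N"] by (simp add: n_def)
  show ?thesis using cfE_bound[OF d nr True[rule_format, of n]] n True
    by (intro exI[of _ n]) auto
next
  case False
  then obtain N where "\<not> cf_defined rd z N" by blast
  then have "\<exists>k. cf_z rd z k = cf_alpha rd z k" by (auto simp: cf_defined_def)
  then obtain k where k: "cf_z rd z k = cf_alpha rd z k" and least: "\<forall>j<k. cf_z rd z j \<noteq> cf_alpha rd z j"
    using exists_least_iff[of "\<lambda>k. cf_z rd z k = cf_alpha rd z k"] by blast
  have dk: "cf_defined rd z k" using least by (simp add: cf_defined_def)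
  have "cfE rd z (Suc (Suc k)) = 0" using cfE_rec[OF dk] k by simp
  then show ?thesis using dk e by auto
qed

lemma hval_cont_pos:
  assumes "hval H z 1 > 0"
  shows "\<exists>\<delta>>0. \<forall>u. cmod u < \<delta> \<longrightarrow> hval H (z - u) 1 > 0"
proof -
  obtain a b b' c where H: "H = (a, b, b', c)" by (cases H) auto
  define f where "f x = Re (a * x * cnj x + b * x + b' * cnj x + c)" for x
  have fh: "hval H x 1 = f x" for x by (simp add: H f_def)
  have "continuous (at z) f" unfolding f_def by (intro continuous_intros continuous_Re)
  then have "(f \<longlongrightarrow> f z) (at z)" by (simp add: continuous_at)
  moreover have "f z > 0" using assms fh by simp
  ultimately have "\<forall>\<^sub>F x in at z. 0 < f x" by (rule order_tendstoD)
  then obtain \<delta> where \<delta>: "\<delta> > 0" "\<And>x. x \<noteq> z \<Longrightarrow> dist x z < \<delta> \<Longrightarrow> 0 < f x"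
    unfolding eventually_at by blast
  have "\<forall>u. cmod u < \<delta> \<longrightarrow> hval H (z - u) 1 > 0"
  proof (intro allI impI)
    fix u :: complex assume u: "cmod u < \<delta>"
    show "hval H (z - u) 1 > 0"
    proof (cases "u = 0")
      case True then show ?thesis using assms by simp
    next
      case False
      then show ?thesis using \<delta>(2)[of "z - u"] u by (simp add: fh dist_norm)
    qed
  qed
  then show ?thesis using \<delta>(1) by blast
qed

lemma exists_pos:
  assumes d: "d \<in> {1, 2, 3, 7, 11}" and nr: "nearest_rounding d rd" and hz: "hval h z 1 > 0"
  shows "\<exists>m. cf_defined rd z m \<and> 0 < hval h (cfP rd z (Suc (Suc m))) (cfQ rd z (Suc (Suc m)))"
proof -
  have d0: "d > 0" using d by auto
  obtain \<delta> where \<delta>: "\<delta> > 0" "\<And>u. cmod u < \<delta> \<Longrightarrow> hval h (z - u) 1 > 0"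
    using hval_cont_pos[OF hz] by blast
  obtain m where m: "cf_defined rd z m" "cmod (cfE rd z (Suc (Suc m))) < min \<delta> 1"
    using cfE_small[OF d nr, of "min \<delta> 1" z] \<delta>(1) by auto
  define p where "p = cfP rd z (Suc (Suc m))"
  define q where "q = cfQ rd z (Suc (Suc m))"
  define E where "E = cfE rd z (Suc (Suc m))"
  have E: "E = q * z - p" by (simp add: E_def cfE_def p_def q_def)
  have p: "p \<in> Od d" unfolding p_def by (rule cfP_Od[OF nr])
  have q: "q \<in> Od d" unfolding q_def by (rule cfQ_Od[OF nr])
  have q0: "q \<noteq> 0"
  proof
    assume "q = 0"
    then have "cmod p < 1" using m(2) by (simp add: E_def[symmetric] E)
    then have "p = 0" using Od_norm_ge1[OF d0 p] by force
    have "cfP rd z (Suc (Suc m)) * cfQ rd z (Suc m) - cfP rd z (Suc m) * cfQ rd z (Suc (Suc m)) = (-1)^(Suc m)"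
      by (rule cf_det)
    then show False using \<open>p = 0\<close> \<open>q = 0\<close> by (simp add: p_def q_def)
  qed
  have q1: "cmod q \<ge> 1" using Od_norm_ge1[OF d0 q q0] .
  have "cmod (E / q) = cmod E / cmod q" by (simp add: norm_divide)
  also have "\<dots> \<le> cmod E" using q1 by (simp add: divide_le_eq) (smt (verit) mult_le_cancel_left1 norm_ge_zero)
  finally have "cmod (E / q) < \<delta>" using m(2) E_def by simp
  then have pos: "hval h (z - E / q) 1 > 0" by (rule \<delta>(2))
  have "p = q * (z - E / q)" using q0 by (simp add: E field_simps)
  then have "hval h p q = (cmod q)^2 * hval h (z - E / q) 1"
    using hval_hom[of h q "z - E / q" 1] by simp
  also have "\<dots> > 0" using pos q0 by simp
  finally show ?thesis using m(1) by (auto simp: p_def q_def)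
qed

lemma cnj_sign: "cnj ((-1::complex)^n) = (-1)^n"
  by simp

lemma sign_sq: "((-1::complex)^n) * ((-1)^n) = 1"
  by (simp flip: power_add)

lemma sign_Od: "((-1::complex)^n) \<in> Od d"
proof -
  have "((-1::complex)^n) = of_int ((-1)^n)" by simp
  then show ?thesis using Od_of_int by metis
qed

lemma into:
  assumes nr: "nearest_rounding d rd"
    and f: "f \<in> {act \<sigma> h0 | \<sigma>. \<sigma> \<in> GL2 d}" and fa: "0 < Re (ha f)"
    and g: "\<gamma> \<in> Gamma_z rd z"
    and c1: "hval_ext f (mob \<gamma> None) < 0" and c2: "0 < hval_ext f (mob \<gamma> (Some z))"
  shows "act (mconj \<gamma>) f \<in> {act \<sigma> h0 | \<sigma>. \<sigma> \<in> GL2 d} \<and> Re (ha (act (mconj \<gamma>) f)) < 0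
         \<and> 0 < hval (act (mconj \<gamma>) f) z 1"
proof -
  obtain n where n: "\<gamma> = (cfQ rd z n, - cfP rd z n, - cfQ rd z (Suc n), cfP rd z (Suc n))"
    using g unfolding Gamma_z_def by blast
  define r where "r = cfQ rd z n"
  define s where "s = - cfP rd z n"
  define t where "t = - cfQ rd z (Suc n)"
  define v where "v = cfP rd z (Suc n)"
  have ge: "\<gamma> = (r, s, t, v)" by (simp add: n r_def s_def t_def v_def)
  have det: "r * v - s * t = (-1)^n"
    using cf_det[of rd z n] by (simp add: r_def s_def t_def v_def algebra_simps)
  have ent: "r \<in> Od d" "s \<in> Od d" "t \<in> Od d" "v \<in> Od d"
    unfolding r_def s_def t_def v_def by (intro Od_uminus cfP_Od[OF nr] cfQ_Od[OF nr])+
  have mc: "mconj \<gamma> = (cnj r, cnj s, cnj t, cnj v)" by (simp add: ge)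
  have gl: "mconj \<gamma> \<in> GL2 d"
    unfolding mc
  proof (rule GL2_intro[where e = "(-1)^n"])
    show "cnj r * cnj v - cnj s * cnj t = (-1)^n"
      using arg_cong[OF det, of cnj] by simp
  qed (auto intro: Od_cnj ent sign_sq sign_Od)
  have inA: "act (mconj \<gamma>) f \<in> {act \<sigma> h0 | \<sigma>. \<sigma> \<in> GL2 d}" by (rule class_act[OF f gl])
  have hv: "hval (act (mconj \<gamma>) f) x y = hval f (r * x + s * y) (t * x + v * y)" for x y
    by (simp add: mc act_hval)
  have t0: "t \<noteq> 0"
  proof
    assume "t = 0"
    then have "mob \<gamma> None = None" by (simp add: ge)
    then show False using c1 fa by simp
  qed
  then have "mob \<gamma> None = Some (r / t)" by (simp add: ge)
  then have "hval f (r / t) 1 < 0" using c1 by simp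
  then have "hval f r t < 0" using hval_div[OF t0, of f r] t0 by (simp add: mult_pos_neg)
  then have neg: "Re (ha (act (mconj \<gamma>) f)) < 0" using hv[of 1 0] by (simp add: hval_10[symmetric])
  have pos: "0 < hval (act (mconj \<gamma>) f) z 1"
  proof (cases "t * z + v = 0")
    case True
    have "t * (r * z + s) - r * (t * z + v) = - (r * v - s * t)" by (simp add: algebra_simps)
    then have "r * z + s \<noteq> 0" using True det by auto
    then show ?thesis using True hv[of z 1] fa by (simp add: hval_x0)
  next
    case False
    then have "mob \<gamma> (Some z) = Some ((r * z + s) / (t * z + v))" by (simp add: ge)
    then have "0 < hval f ((r * z + s) / (t * z + v)) 1" using c2 by simp
    then show ?thesis using hv[of z 1] hval_div[OF False, of f "r * z + s"] False by simp
  qed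
  show ?thesis using inA neg pos by blast
qed

lemma onto:
  assumes d: "d \<in> {1, 2, 3, 7, 11}"
    and nn: "\<not> (\<exists>\<beta> \<in> Od d. of_int \<Delta> = \<beta> * cnj \<beta>)"
    and nr: "nearest_rounding d rd"
    and h0: "h0 \<in> Herm d \<Delta>"
    and h: "h \<in> {act \<sigma> h0 | \<sigma>. \<sigma> \<in> GL2 d}" and ha: "Re (ha h) < 0" and hz: "0 < hval h z 1"
  shows "\<exists>f \<gamma>. f \<in> {act \<sigma> h0 | \<sigma>. \<sigma> \<in> GL2 d} \<and> hval f 0 1 < 0 \<and> 0 < Re (ha f)
          \<and> \<gamma> \<in> Gamma_z rd z \<and> hval_ext f (mob \<gamma> None) < 0 \<and> 0 < hval_ext f (mob \<gamma> (Some z))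
          \<and> h = act (mconj \<gamma>) f"
proof -
  define P where "P m \<longleftrightarrow> cf_defined rd z m \<and> 0 < hval h (cfP rd z (Suc (Suc m))) (cfQ rd z (Suc (Suc m)))" for m
  have "\<exists>m. P m" using exists_pos[OF d nr hz] by (simp add: P_def)
  then obtain m0 where Pm0: "P m0" and least: "\<And>k. k < m0 \<Longrightarrow> \<not> P k"
    using exists_least_iff[of P] by blast
  define P1 where "P1 = cfP rd z (Suc m0)"
  define Q1 where "Q1 = cfQ rd z (Suc m0)"
  define P2 where "P2 = cfP rd z (Suc (Suc m0))"
  define Q2 where "Q2 = cfQ rd z (Suc (Suc m0))"
  have ent: "P1 \<in> Od d" "Q1 \<in> Od d" "P2 \<in> Od d" "Q2 \<in> Od d"
    unfolding P1_def Q1_def P2_def Q2_def by (intro cfP_Od[OF nr] cfQ_Od[OF nr])+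
  have def0: "cf_defined rd z m0" and pos2: "0 < hval h P2 Q2"
    using Pm0 by (auto simp: P_def P2_def Q2_def)
  have neg1: "hval h P1 Q1 < 0"
  proof (cases m0)
    case 0
    then show ?thesis using ha by (simp add: P1_def Q1_def hval_10)
  next
    case (Suc k)
    have "\<not> P k" using least Suc by simp
    moreover have "cf_defined rd z k" using def0 Suc cf_defined_Suc by simp
    ultimately have le: "hval h P1 Q1 \<le> 0" by (auto simp: P_def P1_def Q1_def Suc)
    have dt: "P1 * cfQ rd z m0 - cfP rd z m0 * Q1 = (-1)^m0"
      using cf_det[of rd z m0] by (simp add: P1_def Q1_def)
    have "P1 \<noteq> 0 \<or> Q1 \<noteq> 0"
    proof (rule ccontr)
      assume "\<not> (P1 \<noteq> 0 \<or> Q1 \<noteq> 0)"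
      then show False using dt by simp
    qed
    then have "hval h P1 Q1 \<noteq> 0" using class_nonzero[OF d nn h0 h ent(1) ent(2)] by blast
    then show ?thesis using le by simp
  qed
  define e :: complex where "e = (-1)^(Suc m0)"
  have he: "P2 * Q1 - P1 * Q2 = e" using cf_det[of rd z "Suc m0"] by (simp add: P1_def Q1_def P2_def Q2_def e_def)
  have ee: "e * e = 1" unfolding e_def by (rule sign_sq)
  have ce: "cnj e = e" unfolding e_def by (rule cnj_sign)
  have eO: "e \<in> Od d" unfolding e_def by (rule sign_Od)
  have cme: "cmod e = 1" by (simp add: e_def norm_power)
  define \<gamma> where "\<gamma> = (Q1, - P1, - Q2, P2)"
  define \<tau> where "\<tau> = (cnj (e * P2), cnj (e * P1), cnj (e * Q2), cnj (e * Q1))"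
  have tauGL: "\<tau> \<in> GL2 d"
    unfolding \<tau>_def
  proof (rule GL2_intro[where e = e])
    have "cnj (e * P2) * cnj (e * Q1) - cnj (e * P1) * cnj (e * Q2) = cnj (e * e * (P2 * Q1 - P1 * Q2))"
      by (simp add: algebra_simps)
    also have "\<dots> = e" using he ee ce by simp
    finally show "cnj (e * P2) * cnj (e * Q1) - cnj (e * P1) * cnj (e * Q2) = e" .
  qed (auto intro: Od_cnj Od_mult ent eO ee)
  define f where "f = act \<tau> h"
  have fA: "f \<in> {act \<sigma> h0 | \<sigma>. \<sigma> \<in> GL2 d}" unfolding f_def by (rule class_act[OF h tauGL])
  have m11: "cnj (e * P2) * cnj Q1 + cnj (e * P1) * cnj (- Q2) = 1"
  proof -
    have "cnj (e * P2) * cnj Q1 + cnj (e * P1) * cnj (- Q2) = cnj (e * (P2 * Q1 - P1 * Q2))"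
      by (simp add: algebra_simps)
    then show ?thesis using he ee ce by simp
  qed
  have m22: "cnj (e * Q2) * cnj (- P1) + cnj (e * Q1) * cnj P2 = 1"
  proof -
    have "cnj (e * Q2) * cnj (- P1) + cnj (e * Q1) * cnj P2 = cnj (e * (P2 * Q1 - P1 * Q2))"
      by (simp add: algebra_simps)
    then show ?thesis using he ee ce by simp
  qed
  have prod: "mmult \<tau> (mconj \<gamma>) = (1, 0, 0, 1)"
    using m11 m22 by (simp add: \<tau>_def \<gamma>_def algebra_simps)
  have hf: "h = act (mconj \<gamma>) f" unfolding f_def act_act prod act_id ..
  have fv: "hval f x y = hval h (e * P2 * x + e * P1 * y) (e * Q2 * x + e * Q1 * y)" for x y
    by (simp add: f_def \<tau>_def act_hval)
  have "hval f 1 0 = hval h (e * P2) (e * Q2)" by (simp add: fv)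
  also have "\<dots> = hval h P2 Q2" using hval_hom[of h e P2 Q2] cme by simp
  finally have fa: "0 < Re (ha f)" using pos2 by (simp add: hval_10)
  have "hval f 0 1 = hval h (e * P1) (e * Q1)" by (simp add: fv)
  also have "\<dots> = hval h P1 Q1" using hval_hom[of h e P1 Q1] cme by simp
  finally have fc: "hval f 0 1 < 0" using neg1 by simp
  have gG: "\<gamma> \<in> Gamma_z rd z"
    unfolding Gamma_z_def \<gamma>_def P1_def Q1_def P2_def Q2_def
    using def0 by (intro CollectI exI[of _ "Suc m0"]) simp
  have gv: "hval h x y = hval f (Q1 * x - P1 * y) (- Q2 * x + P2 * y)" for x y
    by (simp add: hf \<gamma>_def act_hval)
  have Q20: "Q2 \<noteq> 0"
  proof
    assume "Q2 = 0"
    then have "hval h P2 Q2 = (cmod P2)^2 * Re (ha h)" by (simp add: hval_x0)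
    also have "\<dots> \<le> 0" using ha by (simp add: mult_nonneg_nonpos)
    finally show False using pos2 by simp
  qed
  have "hval f Q1 (- Q2) = hval h 1 0" using gv[of 1 0] by simp
  also have "\<dots> < 0" using ha by (simp add: hval_10)
  finally have "hval f Q1 (- Q2) < 0" .
  then have "hval f (Q1 / (- Q2)) 1 < 0"
    using hval_div[of "- Q2" f Q1] Q20 by (simp add: zero_less_mult_iff mult_less_0_iff)
  then have c1: "hval_ext f (mob \<gamma> None) < 0" using Q20 by (simp add: \<gamma>_def)
  have c2: "0 < hval_ext f (mob \<gamma> (Some z))"
  proof (cases "- Q2 * z + P2 = 0")
    case True
    then show ?thesis using fa by (simp add: \<gamma>_def)
  next
    case False
    have "0 < hval f (Q1 * z - P1) (- Q2 * z + P2)" using gv[of z 1] hz by simp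
    then have "0 < hval f ((Q1 * z - P1) / (- Q2 * z + P2)) 1"
      using hval_div[OF False, of f "Q1 * z - P1"] False by (simp add: zero_less_mult_iff)
    then show ?thesis using False by (simp add: \<gamma>_def)
  qed
  show ?thesis using fA fc fa gG c1 c2 hf by blast
qed

theorem proposition3p2:
  fixes d :: nat and \<Delta> :: int and z :: complex and rd :: "complex \<Rightarrow> complex"
    and \<A> :: "cmat set"
  assumes "d \<in> {1, 2, 3, 7, 11}"
    and "\<Delta> > 0"
    and "\<not> (\<exists>\<beta> \<in> Od d. of_int \<Delta> = \<beta> * cnj \<beta>)"
    and "nearest_rounding d rd"
    and "\<exists>h0 \<in> Herm d \<Delta>. \<A> = {act \<sigma> h0 | \<sigma>. \<sigma> \<in> GL2 d}"
  shows
    "(\<lambda>(f, \<gamma>). act (mconj \<gamma>) f) `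
        {(f, \<gamma>). f \<in> {h \<in> \<A>. hval h 0 1 < 0 \<and> 0 < Re (ha h)} \<and> \<gamma> \<in> Gamma_z rd z
                   \<and> hval_ext f (mob \<gamma> None) < 0 \<and> 0 < hval_ext f (mob \<gamma> (Some z))}
     = {h \<in> \<A>. Re (ha h) < 0 \<and> 0 < hval h z 1}"
proof -
  obtain h0 where h0: "h0 \<in> Herm d \<Delta>" and A: "\<A> = {act \<sigma> h0 | \<sigma>. \<sigma> \<in> GL2 d}"
    using assms(5) by blast
  show ?thesis
  proof (intro equalityI subsetI)
    fix h
    assume "h \<in> (\<lambda>(f, \<gamma>). act (mconj \<gamma>) f) `
        {(f, \<gamma>). f \<in> {h \<in> \<A>. hval h 0 1 < 0 \<and> 0 < Re (ha h)} \<and> \<gamma> \<in> Gamma_z rd z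
                   \<and> hval_ext f (mob \<gamma> None) < 0 \<and> 0 < hval_ext f (mob \<gamma> (Some z))}"
    then obtain f \<gamma> where h: "h = act (mconj \<gamma>) f" and f: "f \<in> \<A>" "0 < Re (ha f)"
      and g: "\<gamma> \<in> Gamma_z rd z" and c1: "hval_ext f (mob \<gamma> None) < 0"
      and c2: "0 < hval_ext f (mob \<gamma> (Some z))"
      by auto
    show "h \<in> {h \<in> \<A>. Re (ha h) < 0 \<and> 0 < hval h z 1}"
      using into[OF assms(4) f(1)[unfolded A] f(2) g c1 c2] h A by simp
  next
    fix h
    assume "h \<in> {h \<in> \<A>. Re (ha h) < 0 \<and> 0 < hval h z 1}"
    then have hA: "h \<in> {act \<sigma> h0 | \<sigma>. \<sigma> \<in> GL2 d}" and ha: "Re (ha h) < 0" and hz: "0 < hval h z 1"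
      using A by auto
    obtain f \<gamma> where fA: "f \<in> {act \<sigma> h0 | \<sigma>. \<sigma> \<in> GL2 d}" and fc: "hval f 0 1 < 0" and fa: "0 < Re (ha f)"
      and g: "\<gamma> \<in> Gamma_z rd z" and c1: "hval_ext f (mob \<gamma> None) < 0"
      and c2: "0 < hval_ext f (mob \<gamma> (Some z))" and hf: "h = act (mconj \<gamma>) f"
      using onto[OF assms(1) assms(3) assms(4) h0 hA ha hz] by blast
    show "h \<in> (\<lambda>(f, \<gamma>). act (mconj \<gamma>) f) `
        {(f, \<gamma>). f \<in> {h \<in> \<A>. hval h 0 1 < 0 \<and> 0 < Re (ha h)} \<and> \<gamma> \<in> Gamma_z rd z
                   \<and> hval_ext f (mob \<gamma> None) < 0 \<and> 0 < hval_ext f (mob \<gamma> (Some z))}"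
      using fA fc fa g c1 c2 hf A by (intro image_eqI[where x = "(f, \<gamma>)"]) auto
  qed
qed

end
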